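(* Let $\omega$ be a primitive third root of unity and $\mathcal{C}=\mathbb{C}\langle x,y,z\rangle/(x^2,y^2,z^2,\ zxy+\omega xyz+\omega^2 yzx,\ zxy+\omega^2 xyz+\omega yzx)$. Then the element $g_0=zxy+xyz+yzx$ of $\mathcal{C}$ satisfies $g_0x=xg_0=g_0y=yg_0=g_0z=zg_0=0$. *)

theory Defs
  imports Complex_Main
begin

text \<open>The free associative algebra C<x,y,z>: elements are coefficient functions on words
  over the alphabet {x,y,z}; the product is concatenation-convolution. Elements of
  the ideal below are automatically finitely supported (noncommutative polynomials).\<close>

datatype gen = X | Y | Z

type_synonym ncpoly = "gen list \<Rightarrow> complex"

definition nc_zero :: ncpoly where "nc_zero = (\<lambda>w. 0)"
definition nc_add :: "ncpoly \<Rightarrow> ncpoly \<Rightarrow> ncpoly" where "nc_add p q = (\<lambda>w. p w + q w)"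
definition nc_smult :: "complex \<Rightarrow> ncpoly \<Rightarrow> ncpoly" where "nc_smult c p = (\<lambda>w. c * p w)"
definition nc_mult :: "ncpoly \<Rightarrow> ncpoly \<Rightarrow> ncpoly" where
  "nc_mult p q = (\<lambda>w. \<Sum>i\<le>length w. p (take i w) * q (drop i w))"

definition nc_word :: "gen list \<Rightarrow> ncpoly" where "nc_word u = (\<lambda>w. if w = u then 1 else 0)"

text \<open>Two-sided ideal generated by a set of relations R: smallest set containing R,
  0, closed under addition, scalar multiples, and left/right multiplication by
  words (monomials); together with linearity this is the usual two-sided ideal.\<close>
inductive_set nc_ideal :: "ncpoly set \<Rightarrow> ncpoly set" for R where
  gen: "r \<in> R \<Longrightarrow> r \<in> nc_ideal R"
| zero: "nc_zero \<in> nc_ideal R"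
| add: "p \<in> nc_ideal R \<Longrightarrow> q \<in> nc_ideal R \<Longrightarrow> nc_add p q \<in> nc_ideal R"
| smult: "p \<in> nc_ideal R \<Longrightarrow> nc_smult c p \<in> nc_ideal R"
| lmult: "p \<in> nc_ideal R \<Longrightarrow> nc_mult (nc_word u) p \<in> nc_ideal R"
| rmult: "p \<in> nc_ideal R \<Longrightarrow> nc_mult p (nc_word u) \<in> nc_ideal R"

definition nc_eq_mod :: "ncpoly set \<Rightarrow> ncpoly \<Rightarrow> ncpoly \<Rightarrow> bool" where
  "nc_eq_mod R p q \<longleftrightarrow> nc_add p (nc_smult (-1) q) \<in> nc_ideal R"

definition rels_C :: "complex \<Rightarrow> ncpoly set" where
  "rels_C \<omega> = {nc_word [X,X], nc_word [Y,Y], nc_word [Z,Z],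
     nc_add (nc_word [Z,X,Y]) (nc_add (nc_smult \<omega> (nc_word [X,Y,Z])) (nc_smult (\<omega>^2) (nc_word [Y,Z,X]))),
     nc_add (nc_word [Z,X,Y]) (nc_add (nc_smult (\<omega>^2) (nc_word [X,Y,Z])) (nc_smult \<omega> (nc_word [Y,Z,X])))}"

definition g0 :: ncpoly where
  "g0 = nc_add (nc_word [Z,X,Y]) (nc_add (nc_word [X,Y,Z]) (nc_word [Y,Z,X]))"

end

theory Submission
  imports Defs
begin

lemma nc_mult_add_l: "nc_mult (nc_add p q) r = nc_add (nc_mult p r) (nc_mult q r)"
  unfolding nc_mult_def nc_add_def by (auto simp: sum.distrib ring_distribs)
lemma nc_mult_add_r: "nc_mult r (nc_add p q) = nc_add (nc_mult r p) (nc_mult r q)"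
  unfolding nc_mult_def nc_add_def by (auto simp: sum.distrib ring_distribs)
lemma nc_mult_smult_l: "nc_mult (nc_smult c p) r = nc_smult c (nc_mult p r)"
  unfolding nc_mult_def nc_smult_def by (auto simp: sum_distrib_left mult.assoc)
lemma nc_mult_smult_r: "nc_mult r (nc_smult c p) = nc_smult c (nc_mult r p)"
  unfolding nc_mult_def nc_smult_def by (auto simp: sum_distrib_left mult.left_commute)

lemma take_drop_iff:
  assumes "i \<le> length w"
  shows "(take i w = u \<and> drop i w = v) \<longleftrightarrow> (i = length u \<and> w = u @ v)"
proof
  assume h: "take i w = u \<and> drop i w = v"
  then have "w = u @ v" by (metis append_take_drop_id)
  moreover have "length u = i" using h assms by auto
  ultimately show "i = length u \<and> w = u @ v" by simp
qed auto

lemma word_mult: "nc_mult (nc_word u) (nc_word v) = nc_word (u @ v)"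
proof (rule ext)
  fix w
  have "nc_mult (nc_word u) (nc_word v) w
      = (\<Sum>i\<le>length w. if i = length u \<and> w = u @ v then 1 else 0)"
    unfolding nc_mult_def nc_word_def
    by (rule sum.cong) (auto simp: take_drop_iff[symmetric] split: if_splits)
  also have "\<dots> = nc_word (u @ v) w"
    unfolding nc_word_def by (cases "w = u @ v") auto
  finally show "nc_mult (nc_word u) (nc_word v) w = nc_word (u @ v) w" .
qed

lemma lin:
  assumes "p \<in> nc_ideal R" "q \<in> nc_ideal R"
  shows "(\<lambda>w. a * p w + b * q w) \<in> nc_ideal R"
proof -
  have "nc_add (nc_smult a p) (nc_smult b q) \<in> nc_ideal R"
    using assms by (intro nc_ideal.add nc_ideal.smult)
  moreover have "nc_add (nc_smult a p) (nc_smult b q) = (\<lambda>w. a * p w + b * q w)"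
    unfolding nc_add_def nc_smult_def by simp
  ultimately show ?thesis by simp
qed

lemma eqI: "p \<in> I \<Longrightarrow> p = q \<Longrightarrow> q \<in> I" by simp

lemma key:
  fixes \<omega> :: complex
  assumes w3: "\<omega> ^ 3 = 1" and w1: "\<omega> \<noteq> 1"
    and P1: "nc_add A (nc_add (nc_smult \<omega> B) (nc_smult (\<omega>^2) C)) \<in> nc_ideal R"
    and P2: "nc_add A (nc_add (nc_smult (\<omega>^2) B) (nc_smult \<omega> C)) \<in> nc_ideal R"
    and K: "A \<in> nc_ideal R \<or> B \<in> nc_ideal R \<or> C \<in> nc_ideal R"
  shows "nc_eq_mod R (nc_add A (nc_add B C)) nc_zero"
proof -
  let ?I = "nc_ideal R"
  have s: "\<omega>^2 + \<omega> + 1 = 0"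
  proof -
    have "(\<omega> - 1) * (\<omega>^2 + \<omega> + 1) = 0" using w3 by (simp add: algebra_simps power3_eq_cube power2_eq_square)
    thus ?thesis using w1 by simp
  qed
  have w0: "\<omega> \<noteq> 0" using w3 by auto
  have t: "\<omega> - \<omega>^2 \<noteq> 0"
  proof
    assume "\<omega> - \<omega>^2 = 0"
    then have "\<omega> * (1 - \<omega>) = 0" by (simp add: algebra_simps power2_eq_square)
    thus False using w0 w1 by simp
  qed
  have c3: "\<omega>^3 = 1" by fact
  define p1 where "p1 = nc_add A (nc_add (nc_smult \<omega> B) (nc_smult (\<omega>^2) C))"
  define p2 where "p2 = nc_add A (nc_add (nc_smult (\<omega>^2) B) (nc_smult \<omega> C))"
  have p1w: "\<And>w. p1 w = A w + \<omega> * B w + \<omega>^2 * C w" unfolding p1_def nc_add_def nc_smult_def by simp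
  have p2w: "\<And>w. p2 w = A w + \<omega>^2 * B w + \<omega> * C w" unfolding p2_def nc_add_def nc_smult_def by simp
  have d: "(\<lambda>w. 1 * p1 w + (-1) * p2 w) \<in> ?I" using P1 P2 unfolding p1_def p2_def by (rule lin)
  have dw: "\<And>w. 1 * p1 w + (-1) * p2 w = (\<omega> - \<omega>^2) * (B w - C w)" using p1w p2w by (simp add: algebra_simps)
  have all: "A \<in> ?I \<and> B \<in> ?I \<and> C \<in> ?I"
  proof -
    have BC: "B \<in> ?I \<longleftrightarrow> C \<in> ?I"
    proof
      assume "B \<in> ?I"
      have "(\<lambda>w. (-1/(\<omega> - \<omega>^2)) * (1 * p1 w + (-1) * p2 w) + 1 * B w) \<in> ?I" using d \<open>B \<in> ?I\<close> by (rule lin)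
      moreover have "(\<lambda>w. (-1/(\<omega> - \<omega>^2)) * (1 * p1 w + (-1) * p2 w) + 1 * B w) = C"
        using t by (intro ext, simp only: dw, simp add: field_simps)
      ultimately show "C \<in> ?I" by simp
    next
      assume "C \<in> ?I"
      have "(\<lambda>w. (1/(\<omega> - \<omega>^2)) * (1 * p1 w + (-1) * p2 w) + 1 * C w) \<in> ?I" using d \<open>C \<in> ?I\<close> by (rule lin)
      moreover have "(\<lambda>w. (1/(\<omega> - \<omega>^2)) * (1 * p1 w + (-1) * p2 w) + 1 * C w) = B"
        using t by (intro ext, simp only: dw, simp add: field_simps)
      ultimately show "B \<in> ?I" by simp
    qed
    have ABC: "B \<in> ?I \<Longrightarrow> C \<in> ?I \<Longrightarrow> A \<in> ?I"
    proof -
      assume b: "B \<in> ?I" and c: "C \<in> ?I"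
      have "(\<lambda>w. (-\<omega>) * B w + (- (\<omega>^2)) * C w) \<in> ?I" (is "?bc \<in> _") using b c by (rule lin)
      have "(\<lambda>w. 1 * p1 w + 1 * ((- \<omega>) * B w + - (\<omega>^2) * C w)) \<in> ?I" using P1[folded p1_def] \<open>?bc \<in> ?I\<close> by (rule lin)
      moreover have "(\<lambda>w. 1 * p1 w + 1 * ((- \<omega>) * B w + - (\<omega>^2) * C w)) = A" by (auto simp: p1w)
      ultimately show "A \<in> ?I" by simp
    qed
    have A_B: "A \<in> ?I \<Longrightarrow> B \<in> ?I"
    proof -
      assume a: "A \<in> ?I"
      have e: "(\<lambda>w. \<omega> * p1 w + (- (\<omega>^2)) * p2 w) \<in> ?I" using P1 P2 unfolding p1_def p2_def by (rule lin)
      have "(\<lambda>w. 1 * (\<omega> * p1 w + (- (\<omega>^2)) * p2 w) + (\<omega>^2 - \<omega>) * A w) \<in> ?I" using e a by (rule lin)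
      moreover have "\<And>w. 1 * (\<omega> * p1 w + (- (\<omega>^2)) * p2 w) + (\<omega>^2 - \<omega>) * A w = (\<omega>^2 - \<omega>^4) * B w"
        by (simp add: p1w p2w algebra_simps power2_eq_square power3_eq_cube power4_eq_xxxx)
      moreover have "\<omega>^4 = \<omega>" using power_add[of \<omega> 3 1] c3 by simp
      ultimately have bb: "(\<lambda>w. (\<omega>^2 - \<omega>) * B w) \<in> ?I" by simp
      have "(\<lambda>w. (1/(\<omega>^2 - \<omega>)) * ((\<omega>^2 - \<omega>) * B w) + 0 * A w) \<in> ?I" using bb a by (rule lin)
      moreover have "(\<lambda>w. (1/(\<omega>^2 - \<omega>)) * ((\<omega>^2 - \<omega>) * B w) + 0 * A w) = B"
        using t by (auto simp: field_simps)
      ultimately show "B \<in> ?I" by simp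
    qed
    show ?thesis using K BC ABC A_B by blast
  qed
  have "(\<lambda>w. 1 * A w + 1 * (1 * B w + 1 * C w)) \<in> ?I" using all by (intro lin) auto
  moreover have "(\<lambda>w. 1 * A w + 1 * (1 * B w + 1 * C w)) = nc_add (nc_add A (nc_add B C)) (nc_smult (-1) nc_zero)"
    by (auto simp: nc_add_def nc_smult_def nc_zero_def)
  ultimately show ?thesis unfolding nc_eq_mod_def by simp
qed



theorem mainTheorem19:
  fixes \<omega> :: complex
  assumes "\<omega> ^ 3 = 1" and "\<omega> \<noteq> 1"
  shows "\<forall>v\<in>{X, Y, Z}.
           nc_eq_mod (rels_C \<omega>) (nc_mult g0 (nc_word [v])) nc_zero \<and>
           nc_eq_mod (rels_C \<omega>) (nc_mult (nc_word [v]) g0) nc_zero"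
proof -
  let ?R = "rels_C \<omega>"
  let ?I = "nc_ideal ?R"
  have r1: "nc_add (nc_word [Z,X,Y]) (nc_add (nc_smult \<omega> (nc_word [X,Y,Z])) (nc_smult (\<omega>^2) (nc_word [Y,Z,X]))) \<in> ?I"
    by (rule nc_ideal.gen) (simp add: rels_C_def)
  have r2: "nc_add (nc_word [Z,X,Y]) (nc_add (nc_smult (\<omega>^2) (nc_word [X,Y,Z])) (nc_smult \<omega> (nc_word [Y,Z,X]))) \<in> ?I"
    by (rule nc_ideal.gen) (simp add: rels_C_def)
  have sq: "nc_word [v,v] \<in> ?I" if "v \<in> {X,Y,Z}" for v
    using that by (intro nc_ideal.gen) (auto simp: rels_C_def)
  have sqL: "nc_word (u @ [v,v]) \<in> ?I" if "v \<in> {X,Y,Z}" for u v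
    using nc_ideal.lmult[OF sq[OF that], of u] by (simp add: word_mult)
  have sqR: "nc_word ([v,v] @ u) \<in> ?I" if "v \<in> {X,Y,Z}" for u v
    using nc_ideal.rmult[OF sq[OF that], of u] by (simp add: word_mult)
  have right: "nc_eq_mod ?R (nc_mult g0 (nc_word [v])) nc_zero" if v: "v \<in> {X,Y,Z}" for v
  proof -
    have e: "nc_mult g0 (nc_word [v]) = nc_add (nc_word [Z,X,Y,v]) (nc_add (nc_word [X,Y,Z,v]) (nc_word [Y,Z,X,v]))"
      by (simp add: g0_def nc_mult_add_l word_mult)
    have P1: "nc_add (nc_word [Z,X,Y,v]) (nc_add (nc_smult \<omega> (nc_word [X,Y,Z,v])) (nc_smult (\<omega>^2) (nc_word [Y,Z,X,v]))) \<in> ?I"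
      using nc_ideal.rmult[OF r1, of "[v]"] by (simp add: nc_mult_add_l nc_mult_smult_l word_mult)
    have P2: "nc_add (nc_word [Z,X,Y,v]) (nc_add (nc_smult (\<omega>^2) (nc_word [X,Y,Z,v])) (nc_smult \<omega> (nc_word [Y,Z,X,v]))) \<in> ?I"
      using nc_ideal.rmult[OF r2, of "[v]"] by (simp add: nc_mult_add_l nc_mult_smult_l word_mult)
    have K: "nc_word [Z,X,Y,v] \<in> ?I \<or> nc_word [X,Y,Z,v] \<in> ?I \<or> nc_word [Y,Z,X,v] \<in> ?I"
      using v sqL[of X "[Y,Z]"] sqL[of Y "[Z,X]"] sqL[of Z "[X,Y]"] by auto
    show ?thesis unfolding e by (rule key[OF assms P1 P2 K])
  qed
  have left: "nc_eq_mod ?R (nc_mult (nc_word [v]) g0) nc_zero" if v: "v \<in> {X,Y,Z}" for v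
  proof -
    have e: "nc_mult (nc_word [v]) g0 = nc_add (nc_word [v,Z,X,Y]) (nc_add (nc_word [v,X,Y,Z]) (nc_word [v,Y,Z,X]))"
      by (simp add: g0_def nc_mult_add_r word_mult)
    have P1: "nc_add (nc_word [v,Z,X,Y]) (nc_add (nc_smult \<omega> (nc_word [v,X,Y,Z])) (nc_smult (\<omega>^2) (nc_word [v,Y,Z,X]))) \<in> ?I"
      using nc_ideal.lmult[OF r1, of "[v]"] by (simp add: nc_mult_add_r nc_mult_smult_r word_mult)
    have P2: "nc_add (nc_word [v,Z,X,Y]) (nc_add (nc_smult (\<omega>^2) (nc_word [v,X,Y,Z])) (nc_smult \<omega> (nc_word [v,Y,Z,X]))) \<in> ?I"
      using nc_ideal.lmult[OF r2, of "[v]"] by (simp add: nc_mult_add_r nc_mult_smult_r word_mult)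
    have K: "nc_word [v,Z,X,Y] \<in> ?I \<or> nc_word [v,X,Y,Z] \<in> ?I \<or> nc_word [v,Y,Z,X] \<in> ?I"
      using v sqR[of X "[Y,Z]"] sqR[of Y "[Z,X]"] sqR[of Z "[X,Y]"] by auto
    show ?thesis unfolding e by (rule key[OF assms P1 P2 K])
  qed
  show ?thesis using left right by blast
qed

end
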